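(* Let $A$ be a left counital bialgebra. Then the comultiplication $\Delta_T:Ш(A)\to Ш(A)\otimes Ш(A)$ is an algebra homomorphism, i.e. $\Delta_T(\mathfrak a\diamond\mathfrak b)=\Delta_T(\mathfrak a)\bullet\Delta_T(\mathfrak b)$ for all $\mathfrak a,\mathfrak b\in Ш(A)$.
   Context: Throughout, $\mathbf{k}$ is a commutative unital ring, all algebras are unital commutative $\mathbf{k}$-algebras, tensor products are over $\mathbf{k}$. A left counital bialgebra $(H,m,\mu,\Delta,\varepsilon)$ is an algebra $H$ with algebra homomorphisms $\Delta:H\to H\otimes H$ (coassociative) and $\varepsilon:H\to\mathbf{k}$ satisfying left counicity $(\varepsilon\otimes\mathrm{id})\Delta=\beta_\ell$, where $\beta_\ell(u)=1\otimes u$; right counicity is not required. For an algebra $A$ with unit $1_A$, $Ш(A)=\bigoplus_{n\ge1}A^{\otimes n}$, $P_r(\mathfrak a)=1_A\otimes\mathfrak a$, and the product $\diamond$ is defined bilinearly on pure tensors $\mathfrak a=a_1\otimes\mathfrak a'\in A^{\otimes m}$, $\mathfrak b=b_1\otimes\mathfrak b'\in A^{\otimes n}$ by: $a_1b_1$ if $m=n=1$; $a_1b_1\otimes\mathfrak b'$ if $m=1,n\ge2$; $a_1b_1\otimes\mathfrak a'$ if $m\ge2,n=1$; $a_1b_1\otimes\big(\mathfrak a'\diamond(1_A\otimes\mathfrak b')+(1_A\otimes\mathfrak a')\diamond\mathfrak b'-1_A\otimes(\mathfrak a'\diamond\mathfrak b')\big)$ if $m,n\ge2$. $(Ш(A),\diamond)$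 is a commutative algebra with unit $1_A$ and $P_r$ satisfies the Nijenhuis equation $P(x)P(y)=P(P(x)y)+P(xP(y))-P^2(xy)$. $Ш(A)\otimes Ш(A)$ has the product $\bullet$, $(x\otimes y)\bullet(x'\otimes y')=(x\diamond x')\otimes(y\diamond y')$, and $A\otimes A\subseteq Ш(A)\otimes Ш(A)$ via $A=A^{\otimes1}$. When $A$ is a left counital bialgebra with coproduct $\Delta_A$, the linear map $\Delta_T:Ш(A)\to Ш(A)\otimes Ш(A)$ is defined on pure tensors by induction on tensor length: $\Delta_T(a)=\Delta_A(a)$ for $a\in A$, and for $\mathfrak a'\in A^{\otimes n}$, $\Delta_T(1_A\otimes\mathfrak a')=(\mathrm{id}\otimes P_r)\Delta_T(\mathfrak a')$ and $\Delta_T(a_1\otimes\mathfrak a')=\Delta_A(a_1)\bullet(\mathrm{id}\otimes P_r)\Delta_T(\mathfrak a')$. *)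

theory Defs
  imports Main "HOL.Modules" "HOL-Library.Poly_Mapping"
begin

text \<open>Tensor products over k are presented as quotients of free
modules on tuples/lists of algebra elements by the k-submodule generated by the
multilinearity relations; we work with representatives and equality modulo
that submodule.\<close>

definition smult_fm :: "'k::comm_ring_1 \<Rightarrow> ('x \<Rightarrow>\<^sub>0 'k) \<Rightarrow> ('x \<Rightarrow>\<^sub>0 'k)" where
  "smult_fm c v = Poly_Mapping.map (\<lambda>d. c * d) v"

definition lin_ext :: "('x \<Rightarrow> ('y \<Rightarrow>\<^sub>0 'k::comm_ring_1)) \<Rightarrow> ('x \<Rightarrow>\<^sub>0 'k) \<Rightarrow> ('y \<Rightarrow>\<^sub>0 'k)" where
  "lin_ext f v = (\<Sum>x\<in>Poly_Mapping.keys v. smult_fm (Poly_Mapping.lookup v x) (f x))"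

definition bilin_ext :: "('x \<Rightarrow> 'y \<Rightarrow> ('z \<Rightarrow>\<^sub>0 'k::comm_ring_1))
    \<Rightarrow> ('x \<Rightarrow>\<^sub>0 'k) \<Rightarrow> ('y \<Rightarrow>\<^sub>0 'k) \<Rightarrow> ('z \<Rightarrow>\<^sub>0 'k)" where
  "bilin_ext f v w = (\<Sum>x\<in>Poly_Mapping.keys v. \<Sum>y\<in>Poly_Mapping.keys w. smult_fm (Poly_Mapping.lookup v x * Poly_Mapping.lookup w y) (f x y))"

definition slot_gens :: "('k::comm_ring_1 \<Rightarrow> 'a::ab_group_add \<Rightarrow> 'a) \<Rightarrow> ('a \<Rightarrow> 'x) \<Rightarrow> ('x \<Rightarrow>\<^sub>0 'k) set" where
  "slot_gens scale F =
     {Poly_Mapping.single (F (a + b)) 1 - Poly_Mapping.single (F a) 1 - Poly_Mapping.single (F b) 1 | a b. True}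
   \<union> {Poly_Mapping.single (F (scale c a)) 1 - Poly_Mapping.single (F a) c | c a. True}"

inductive_set submod :: "('x \<Rightarrow>\<^sub>0 'k::comm_ring_1) set \<Rightarrow> ('x \<Rightarrow>\<^sub>0 'k) set" for G where
  zero: "0 \<in> submod G"
| gen: "g \<in> G \<Longrightarrow> g \<in> submod G"
| add: "u \<in> submod G \<Longrightarrow> v \<in> submod G \<Longrightarrow> u + v \<in> submod G"
| smult: "u \<in> submod G \<Longrightarrow> smult_fm c u \<in> submod G"

definition tensor_eq :: "('k::comm_ring_1 \<Rightarrow> 'a::ab_group_add \<Rightarrow> 'a) \<Rightarrow> ('a \<Rightarrow> 'x) set
    \<Rightarrow> ('x \<Rightarrow>\<^sub>0 'k) \<Rightarrow> ('x \<Rightarrow>\<^sub>0 'k) \<Rightarrow> bool" where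
  "tensor_eq scale Slots u v \<longleftrightarrow> u - v \<in> submod (\<Union>F\<in>Slots. slot_gens scale F)"

text \<open>Slots: A \<otimes> A (basis 'a \<times> 'a), A \<otimes> A \<otimes> A (basis 'a \<times> 'a \<times> 'a),
  Sha(A) = \<Oplus>_{n\<ge>1} A^{\<otimes>n} (basis nonempty lists), Sha(A) \<otimes> Sha(A) (basis: pairs of lists).\<close>
definition slots2 :: "('a \<Rightarrow> 'a \<times> 'a) set" where
  "slots2 = {(\<lambda>a. (a, b)) | b. True} \<union> {(\<lambda>b. (a, b)) | a. True}"

definition slots3 :: "('a \<Rightarrow> 'a \<times> 'a \<times> 'a) set" where
  "slots3 = {(\<lambda>a. (a, b, c)) | b c. True} \<union> {(\<lambda>b. (a, b, c)) | a c. True}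
          \<union> {(\<lambda>c. (a, b, c)) | a b. True}"

definition slots_sh :: "('a \<Rightarrow> 'a list) set" where
  "slots_sh = {(\<lambda>a. xs @ a # ys) | xs ys. True}"

definition slots_sh2 :: "('a \<Rightarrow> 'a list \<times> 'a list) set" where
  "slots_sh2 = {(\<lambda>a. (xs @ a # ys, zs)) | xs ys zs. True} \<union> {(\<lambda>a. (zs, xs @ a # ys)) | xs ys zs. True}"

definition comm_k_algebra :: "('k::comm_ring_1 \<Rightarrow> 'a::comm_ring_1 \<Rightarrow> 'a) \<Rightarrow> bool" where
  "comm_k_algebra scale \<longleftrightarrow> module scale \<and> (\<forall>c x y. scale c (x * y) = scale c x * y)"

definition mult2 :: "('a::comm_ring_1 \<times> 'a \<Rightarrow>\<^sub>0 'k::comm_ring_1) \<Rightarrow> ('a \<times> 'a \<Rightarrow>\<^sub>0 'k) \<Rightarrow> ('a \<times> 'a \<Rightarrow>\<^sub>0 'k)" where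
  "mult2 = bilin_ext (\<lambda>(a, b) (a', b'). Poly_Mapping.single (a * a', b * b') 1)"

definition left_counital_bialgebra ::
  "('k::comm_ring_1 \<Rightarrow> 'a::comm_ring_1 \<Rightarrow> 'a) \<Rightarrow> ('a \<Rightarrow> ('a \<times> 'a \<Rightarrow>\<^sub>0 'k)) \<Rightarrow> ('a \<Rightarrow> 'k) \<Rightarrow> bool" where
  "left_counital_bialgebra scale \<Delta> \<epsilon> \<longleftrightarrow>
     comm_k_algebra scale
     \<comment> \<open>\<Delta> is a k-algebra homomorphism A \<rightarrow> A \<otimes> A\<close>
   \<and> (\<forall>a b. tensor_eq scale slots2 (\<Delta> (a + b)) (\<Delta> a + \<Delta> b))
   \<and> (\<forall>c a. tensor_eq scale slots2 (\<Delta> (scale c a)) (smult_fm c (\<Delta> a)))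
   \<and> (\<forall>a b. tensor_eq scale slots2 (\<Delta> (a * b)) (mult2 (\<Delta> a) (\<Delta> b)))
   \<and> tensor_eq scale slots2 (\<Delta> 1) (Poly_Mapping.single (1, 1) 1)
     \<comment> \<open>coassociativity: (\<Delta> \<otimes> id) \<Delta> = (id \<otimes> \<Delta>) \<Delta>\<close>
   \<and> (\<forall>u. tensor_eq scale slots3
          (lin_ext (\<lambda>(a, b). lin_ext (\<lambda>(x, y). Poly_Mapping.single (x, y, b) 1) (\<Delta> a)) (\<Delta> u))
          (lin_ext (\<lambda>(a, b). lin_ext (\<lambda>(x, y). Poly_Mapping.single (a, x, y) 1) (\<Delta> b)) (\<Delta> u)))
     \<comment> \<open>\<epsilon> is a k-algebra homomorphism A \<rightarrow> k\<close>
   \<and> (\<forall>a b. \<epsilon> (a + b) = \<epsilon> a + \<epsilon> b)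
   \<and> (\<forall>c a. \<epsilon> (scale c a) = c * \<epsilon> a)
   \<and> (\<forall>a b. \<epsilon> (a * b) = \<epsilon> a * \<epsilon> b)
   \<and> \<epsilon> 1 = 1
     \<comment> \<open>left counicity (\<epsilon> \<otimes> id) \<Delta> = \<beta>_l, with k \<otimes> A identified with A via c \<otimes> a \<mapsto> c a\<close>
   \<and> (\<forall>u. (\<Sum>p\<in>Poly_Mapping.keys (\<Delta> u). scale (Poly_Mapping.lookup (\<Delta> u) p * \<epsilon> (fst p)) (snd p)) = u)"

definition prepend :: "'a \<Rightarrow> ('a list \<Rightarrow>\<^sub>0 'k::comm_ring_1) \<Rightarrow> ('a list \<Rightarrow>\<^sub>0 'k)" where
  "prepend a v = lin_ext (\<lambda>xs. Poly_Mapping.single (a # xs) 1) v"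

definition Pr :: "('a::comm_ring_1 list \<Rightarrow>\<^sub>0 'k::comm_ring_1) \<Rightarrow> ('a list \<Rightarrow>\<^sub>0 'k)" where
  "Pr v = prepend 1 v"

text \<open>The product \<diamond> on pure tensors (basis lists); the empty list is not a basis
  element of Sha(A) and is sent to 0.\<close>
function dia :: "'a::comm_ring_1 list \<Rightarrow> 'a list \<Rightarrow> ('a list \<Rightarrow>\<^sub>0 'k::comm_ring_1)" where
  "dia [a] [b] = Poly_Mapping.single [a * b] 1"
| "dia [a] (b # b' # bs) = Poly_Mapping.single (a * b # b' # bs) 1"
| "dia (a # a' # as) [b] = Poly_Mapping.single (a * b # a' # as) 1"
| "dia (a # a' # as) (b # b' # bs) =
     prepend (a * b) (dia (a' # as) (1 # b' # bs) + dia (1 # a' # as) (b' # bs)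
                      - Pr (dia (a' # as) (b' # bs)))"
| "dia [] ys = 0"
| "dia (x # xs) [] = 0"
  by pat_completeness auto
termination by (relation "measure (\<lambda>(xs, ys). length xs + length ys)") auto

definition diamond :: "('a::comm_ring_1 list \<Rightarrow>\<^sub>0 'k::comm_ring_1) \<Rightarrow> ('a list \<Rightarrow>\<^sub>0 'k) \<Rightarrow> ('a list \<Rightarrow>\<^sub>0 'k)" where
  "diamond = bilin_ext dia"

definition tens :: "('a list \<Rightarrow>\<^sub>0 'k::comm_ring_1) \<Rightarrow> ('a list \<Rightarrow>\<^sub>0 'k) \<Rightarrow> ('a list \<times> 'a list \<Rightarrow>\<^sub>0 'k)" where
  "tens = bilin_ext (\<lambda>x y. Poly_Mapping.single (x, y) 1)"

definition bullet :: "('a::comm_ring_1 list \<times> 'a list \<Rightarrow>\<^sub>0 'k::comm_ring_1)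
    \<Rightarrow> ('a list \<times> 'a list \<Rightarrow>\<^sub>0 'k) \<Rightarrow> ('a list \<times> 'a list \<Rightarrow>\<^sub>0 'k)" where
  "bullet = bilin_ext (\<lambda>(xs, ys) (xs', ys'). tens (dia xs xs') (dia ys ys'))"

definition id_Pr :: "('a::comm_ring_1 list \<times> 'a list \<Rightarrow>\<^sub>0 'k::comm_ring_1) \<Rightarrow> ('a list \<times> 'a list \<Rightarrow>\<^sub>0 'k)" where
  "id_Pr = lin_ext (\<lambda>(xs, ys). Poly_Mapping.single (xs, 1 # ys) 1)"

text \<open>Inclusion A \<otimes> A \<subseteq> Sha(A) \<otimes> Sha(A) via A = A^{\<otimes>1}.\<close>
definition emb2 :: "('a \<times> 'a \<Rightarrow>\<^sub>0 'k::comm_ring_1) \<Rightarrow> ('a list \<times> 'a list \<Rightarrow>\<^sub>0 'k)" where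
  "emb2 = lin_ext (\<lambda>(a, b). Poly_Mapping.single ([a], [b]) 1)"

fun DeltaT_basis :: "('a::comm_ring_1 \<Rightarrow> ('a \<times> 'a \<Rightarrow>\<^sub>0 'k::comm_ring_1)) \<Rightarrow> 'a list \<Rightarrow> ('a list \<times> 'a list \<Rightarrow>\<^sub>0 'k)" where
  "DeltaT_basis \<Delta> [] = 0"
| "DeltaT_basis \<Delta> [a] = emb2 (\<Delta> a)"
| "DeltaT_basis \<Delta> (a # a' # as) =
     (if a = 1 then id_Pr (DeltaT_basis \<Delta> (a' # as))
      else bullet (emb2 (\<Delta> a)) (id_Pr (DeltaT_basis \<Delta> (a' # as))))"

definition DeltaT :: "('a::comm_ring_1 \<Rightarrow> ('a \<times> 'a \<Rightarrow>\<^sub>0 'k::comm_ring_1)) \<Rightarrow> ('a list \<Rightarrow>\<^sub>0 'k) \<Rightarrow> ('a list \<times> 'a list \<Rightarrow>\<^sub>0 'k)" where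
  "DeltaT \<Delta> = lin_ext (DeltaT_basis \<Delta>)"

text \<open>Representatives of elements of Sha(A) = \<Oplus>_{n\<ge>1} A^{\<otimes>n}.\<close>
definition sha_elem :: "('a list \<Rightarrow>\<^sub>0 'k::zero) \<Rightarrow> bool" where
  "sha_elem v \<longleftrightarrow> (\<forall>xs\<in>Poly_Mapping.keys v. xs \<noteq> [])"

end

theory Submission
  imports Defs
begin


lemma lookup_smult [simp]: "Poly_Mapping.lookup (smult_fm c v) k = c * Poly_Mapping.lookup v k"
  by (simp add: smult_fm_def map.rep_eq when_def)

lemma smult_add_right: "smult_fm c (u + v) = smult_fm c u + smult_fm c v"
  by (rule poly_mapping_eqI) (simp add: lookup_add algebra_simps)
lemma smult_diff_right: "smult_fm c (u - v) = smult_fm c u - smult_fm c v"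
  by (rule poly_mapping_eqI) (simp add: lookup_minus algebra_simps)
lemma smult_add_left: "smult_fm (c + d) u = smult_fm c u + smult_fm d u"
  by (rule poly_mapping_eqI) (simp add: lookup_add algebra_simps)
lemma smult_smult: "smult_fm c (smult_fm d u) = smult_fm (c * d) u"
  by (rule poly_mapping_eqI) (simp add: algebra_simps)
lemma smult_one [simp]: "smult_fm 1 u = u"
  by (rule poly_mapping_eqI) simp
lemma smult_zero_left [simp]: "smult_fm 0 u = 0"
  by (rule poly_mapping_eqI) simp
lemma smult_zero_right [simp]: "smult_fm c 0 = 0"
  by (rule poly_mapping_eqI) simp
lemma smult_minus_one: "smult_fm (-1) u = - u"
  by (rule poly_mapping_eqI) simp
lemma smult_single: "smult_fm c (Poly_Mapping.single x d) = Poly_Mapping.single x (c * d)"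
  by (rule poly_mapping_eqI) (simp add: lookup_single when_def)
lemma smult_sum: "smult_fm c (sum f A) = (\<Sum>x\<in>A. smult_fm c (f x))"
  by (induction A rule: infinite_finite_induct) (auto simp: smult_add_right)
lemma keys_smult: "Poly_Mapping.keys (smult_fm c v) \<subseteq> Poly_Mapping.keys v"
  by (auto simp: in_keys_iff)

lemma lin_ext_superset:
  assumes "finite K" "Poly_Mapping.keys v \<subseteq> K"
  shows "lin_ext f v = (\<Sum>x\<in>K. smult_fm (Poly_Mapping.lookup v x) (f x))"
  unfolding lin_ext_def
  by (rule sum.mono_neutral_left) (use assms in \<open>auto simp: in_keys_iff\<close>)

lemma lin_ext_add: "lin_ext f (u + v) = lin_ext f u + lin_ext f v"
proof -
  let ?K = "Poly_Mapping.keys u \<union> Poly_Mapping.keys v"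
  have "lin_ext f (u + v) = (\<Sum>x\<in>?K. smult_fm (Poly_Mapping.lookup (u+v) x) (f x))"
    by (rule lin_ext_superset) (auto dest: subsetD[OF keys_add])
  also have "\<dots> = (\<Sum>x\<in>?K. smult_fm (Poly_Mapping.lookup u x) (f x)) + (\<Sum>x\<in>?K. smult_fm (Poly_Mapping.lookup v x) (f x))"
    by (simp add: lookup_add smult_add_left sum.distrib)
  also have "\<dots> = lin_ext f u + lin_ext f v"
    by (subst (1 2) lin_ext_superset[symmetric]) auto
  finally show ?thesis .
qed

lemma lin_ext_zero [simp]: "lin_ext f 0 = 0"
  by (simp add: lin_ext_def)

lemma lin_ext_diff: "lin_ext f (u - v) = lin_ext f u - lin_ext f v"
  using lin_ext_add[of f "u - v" v] by simp

lemma lin_ext_smult: "lin_ext f (smult_fm c v) = smult_fm c (lin_ext f v)"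
proof -
  have "lin_ext f (smult_fm c v) = (\<Sum>x\<in>Poly_Mapping.keys v. smult_fm (Poly_Mapping.lookup (smult_fm c v) x) (f x))"
    by (rule lin_ext_superset) (auto simp: keys_smult)
  also have "\<dots> = smult_fm c (lin_ext f v)"
    by (simp add: lin_ext_def smult_sum smult_smult)
  finally show ?thesis .
qed

lemma lin_ext_single: "lin_ext f (Poly_Mapping.single x c) = smult_fm c (f x)"
  by (simp add: lin_ext_def)

lemma lin_ext_single1 [simp]: "lin_ext f (Poly_Mapping.single x 1) = f x"
  by (simp add: lin_ext_def)

lemma lin_ext_cong: "(\<And>x. x \<in> Poly_Mapping.keys v \<Longrightarrow> f x = g x) \<Longrightarrow> lin_ext f v = lin_ext g v"
  by (simp add: lin_ext_def)

lemma lin_ext_fun_add: "lin_ext (\<lambda>x. f x + g x) v = lin_ext f v + lin_ext g v"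
  by (simp add: lin_ext_def smult_add_right sum.distrib)
lemma lin_ext_fun_diff: "lin_ext (\<lambda>x. f x - g x) v = lin_ext f v - lin_ext g v"
  by (simp add: lin_ext_def smult_diff_right sum_subtractf)
lemma lin_ext_fun_smult: "lin_ext (\<lambda>x. smult_fm c (f x)) v = smult_fm c (lin_ext f v)"
  by (simp add: lin_ext_def smult_sum smult_smult mult.commute)
lemma lin_ext_fun_zero [simp]: "lin_ext (\<lambda>x. 0) v = 0"
  by (simp add: lin_ext_def)

lemma lin_ext_id: "lin_ext (\<lambda>x. Poly_Mapping.single x 1) v = v"
proof (rule poly_mapping_eqI)
  fix k
  show "Poly_Mapping.lookup (lin_ext (\<lambda>x. Poly_Mapping.single x 1) v) k = Poly_Mapping.lookup v k"
    by (simp add: lin_ext_def lookup_sum smult_single lookup_single when_def in_keys_iff)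
qed

definition linmap :: "(('x \<Rightarrow>\<^sub>0 'k::comm_ring_1) \<Rightarrow> ('y \<Rightarrow>\<^sub>0 'k)) \<Rightarrow> bool" where
  "linmap L \<longleftrightarrow> (\<forall>u v. L (u + v) = L u + L v) \<and> (\<forall>c u. L (smult_fm c u) = smult_fm c (L u))"

lemma linmap_lin_ext: "linmap (lin_ext f)"
  by (simp add: linmap_def lin_ext_add lin_ext_smult)

lemma linmap_comp: "linmap L \<Longrightarrow> linmap M \<Longrightarrow> linmap (\<lambda>v. L (M v))"
  by (simp add: linmap_def)

lemma linmap_basis:
  assumes "linmap L" shows "L v = lin_ext (\<lambda>x. L (Poly_Mapping.single x 1)) v"
proof -
  have add: "\<And>u w. L (u + w) = L u + L w" and sm: "\<And>c u. L (smult_fm c u) = smult_fm c (L u)"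
    using assms by (auto simp: linmap_def)
  have z: "L 0 = 0" using add[of 0 0] by simp
  have s: "L (sum g A) = (\<Sum>x\<in>A. L (g x))" for g :: "_ \<Rightarrow> _" and A
    by (induction A rule: infinite_finite_induct) (auto simp: z add)
  have "L v = L (lin_ext (\<lambda>x. Poly_Mapping.single x 1) v)" by (simp add: lin_ext_id)
  also have "\<dots> = lin_ext (\<lambda>x. L (Poly_Mapping.single x 1)) v"
    unfolding lin_ext_def s sm ..
  finally show ?thesis .
qed

lemma linmap_eqI:
  assumes "linmap L" "linmap M" "\<And>x. x \<in> Poly_Mapping.keys v \<Longrightarrow> L (Poly_Mapping.single x 1) = M (Poly_Mapping.single x 1)"
  shows "L v = M v"
  by (subst linmap_basis[OF assms(1)], subst linmap_basis[OF assms(2)]) (rule lin_ext_cong, fact)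

lemma linmap_diff: "linmap L \<Longrightarrow> L (u - v) = L u - L v"
  unfolding linmap_def by (metis add_diff_cancel diff_add_cancel)

lemma linmap_zero: "linmap L \<Longrightarrow> L 0 = 0"
  unfolding linmap_def by (metis add_cancel_right_right)

lemma bilin_ext_alt: "bilin_ext f u v = lin_ext (\<lambda>x. lin_ext (f x) v) u"
  by (simp add: bilin_ext_def lin_ext_def smult_sum smult_smult)

lemma lin_ext_lin_ext: "lin_ext f (lin_ext g v) = lin_ext (\<lambda>x. lin_ext f (g x)) v"
  by (rule linmap_eqI) (auto intro: linmap_comp linmap_lin_ext)



lemma submod_uminus: "u \<in> submod G \<Longrightarrow> - u \<in> submod G"
  using submod.smult[of u G "-1"] by (simp add: smult_minus_one)
lemma submod_diff: "u \<in> submod G \<Longrightarrow> v \<in> submod G \<Longrightarrow> u - v \<in> submod G"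
  using submod.add[OF _ submod_uminus] by (metis diff_conv_add_uminus)
lemma submod_sum: "(\<And>x. x \<in> A \<Longrightarrow> f x \<in> submod G) \<Longrightarrow> sum f A \<in> submod G"
  by (induction A rule: infinite_finite_induct) (auto intro: submod.intros)
lemma submod_lin_ext: "(\<And>x. x \<in> Poly_Mapping.keys v \<Longrightarrow> f x \<in> submod G) \<Longrightarrow> lin_ext f v \<in> submod G"
  unfolding lin_ext_def by (rule submod_sum) (auto intro: submod.smult)
lemma submod_linmap:
  assumes "linmap L" "\<And>g. g \<in> G \<Longrightarrow> L g \<in> submod G'" "u \<in> submod G"
  shows "L u \<in> submod G'"
  using assms(3)
proof induction
  case zero then show ?case using linmap_zero[OF assms(1)] by (simp add: submod.zero)
next
  case (gen g) then show ?case by (rule assms(2))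
next
  case (add u v) then show ?case using assms(1) by (simp add: linmap_def submod.add)
next
  case (smult u c) then show ?case using assms(1) by (simp add: linmap_def submod.smult)
qed

definition rn :: "('x \<Rightarrow> 'y) \<Rightarrow> ('x \<Rightarrow>\<^sub>0 'k::comm_ring_1) \<Rightarrow> ('y \<Rightarrow>\<^sub>0 'k)" where
  "rn \<phi> = lin_ext (\<lambda>x. Poly_Mapping.single (\<phi> x) 1)"

lemma rn_single: "rn \<phi> (Poly_Mapping.single x c) = Poly_Mapping.single (\<phi> x) c"
  by (simp add: rn_def lin_ext_single smult_single)

lemma rn_gen: "g \<in> slot_gens scale F \<Longrightarrow> rn \<phi> g \<in> slot_gens scale (\<phi> \<circ> F)"
  unfolding slot_gens_def rn_def
  by (erule UnE; clarsimp simp: lin_ext_diff lin_ext_single smult_single; blast)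

lemma rn_submod:
  assumes "\<And>F. F \<in> Sl \<Longrightarrow> \<phi> \<circ> F \<in> Sl'" "u \<in> submod (\<Union>F\<in>Sl. slot_gens scale F)"
  shows "rn \<phi> u \<in> submod (\<Union>F\<in>Sl'. slot_gens scale F)"
  apply (rule submod_linmap[OF _ _ assms(2)])
   apply (simp add: rn_def linmap_lin_ext)
  using assms(1) rn_gen by (fastforce intro: submod.gen)

definition S2 :: "('k::comm_ring_1 \<Rightarrow> 'a::ab_group_add \<Rightarrow> 'a) \<Rightarrow> ('a \<times> 'a \<Rightarrow>\<^sub>0 'k) set" where
  "S2 scale = submod (\<Union>F\<in>slots2. slot_gens scale F)"
definition Ssh :: "('k::comm_ring_1 \<Rightarrow> 'a::ab_group_add \<Rightarrow> 'a) \<Rightarrow> ('a list \<Rightarrow>\<^sub>0 'k) set" where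
  "Ssh scale = submod (\<Union>F\<in>slots_sh. slot_gens scale F)"
definition Ssh2 :: "('k::comm_ring_1 \<Rightarrow> 'a::ab_group_add \<Rightarrow> 'a) \<Rightarrow> ('a list \<times> 'a list \<Rightarrow>\<^sub>0 'k) set" where
  "Ssh2 scale = submod (\<Union>F\<in>slots_sh2. slot_gens scale F)"

lemma prepend_rn: "prepend c = rn (Cons c)"
  by (simp add: prepend_def rn_def fun_eq_iff)
lemma id_Pr_rn: "id_Pr = rn (\<lambda>(xs, ys). (xs, 1 # ys))"
  unfolding id_Pr_def rn_def by (rule ext, rule lin_ext_cong) (auto split: prod.splits)
lemma emb2_rn: "emb2 = rn (\<lambda>(a, b). ([a], [b]))"
  unfolding emb2_def rn_def by (rule ext, rule lin_ext_cong) (auto split: prod.splits)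

lemma slots_sh_mem: "(\<lambda>a. xs @ a # ys) \<in> slots_sh" by (auto simp: slots_sh_def)
lemma slots_sh2_mem1: "(\<lambda>a. (xs @ a # ys, zs)) \<in> slots_sh2" by (auto simp: slots_sh2_def)
lemma slots_sh2_mem2: "(\<lambda>a. (zs, xs @ a # ys)) \<in> slots_sh2" unfolding slots_sh2_def by blast

lemma prepend_Ssh: "u \<in> Ssh scale \<Longrightarrow> prepend c u \<in> Ssh scale"
  unfolding Ssh_def prepend_rn
proof (rule rn_submod)
  fix F :: "'a \<Rightarrow> 'a list" assume "F \<in> slots_sh"
  then obtain xs ys where "F = (\<lambda>a. xs @ a # ys)" by (auto simp: slots_sh_def)
  then show "(#) c \<circ> F \<in> slots_sh" using slots_sh_mem[of "c # xs" ys] by (simp add: o_def)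
qed

lemma Pr_Ssh: "u \<in> Ssh scale \<Longrightarrow> Pr u \<in> Ssh scale"
  unfolding Pr_def by (rule prepend_Ssh)

lemma id_Pr_Ssh2: "u \<in> Ssh2 scale \<Longrightarrow> id_Pr u \<in> Ssh2 scale"
  unfolding Ssh2_def id_Pr_rn
proof (rule rn_submod)
  fix F :: "'a \<Rightarrow> 'a list \<times> 'a list" assume "F \<in> slots_sh2"
  then consider xs ys zs where "F = (\<lambda>a. (xs @ a # ys, zs))" | xs ys zs where "F = (\<lambda>a. (zs, xs @ a # ys))"
    by (auto simp: slots_sh2_def)
  then show "(\<lambda>(xs, ys). (xs, 1 # ys)) \<circ> F \<in> slots_sh2"
  proof cases
    case (1 xs ys zs) then show ?thesis using slots_sh2_mem1[of xs ys "1#zs"] by (simp add: o_def)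
  next
    case (2 xs ys zs) then show ?thesis using slots_sh2_mem2[of zs "1#xs" ys] by (simp add: o_def)
  qed
qed

lemma emb2_Ssh2: "u \<in> S2 scale \<Longrightarrow> emb2 u \<in> Ssh2 scale"
  unfolding Ssh2_def S2_def emb2_rn
proof (rule rn_submod)
  fix F :: "'a \<Rightarrow> 'a \<times> 'a" assume "F \<in> slots2"
  then consider b where "F = (\<lambda>a. (a, b))" | a where "F = (\<lambda>b. (a, b))"
    by (auto simp: slots2_def)
  then show "(\<lambda>(a, b). ([a], [b])) \<circ> F \<in> slots_sh2"
  proof cases
    case (1 b) then show ?thesis using slots_sh2_mem1[of "[]" "[]" "[b]"] by (simp add: o_def)
  next
    case (2 a) then show ?thesis using slots_sh2_mem2[of "[a]" "[]" "[]"] by (simp add: o_def)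
  qed
qed

lemma linmap_bilin1: "linmap (\<lambda>u. bilin_ext f u v)"
  by (simp add: bilin_ext_alt linmap_lin_ext)
lemma linmap_bilin2: "linmap (\<lambda>v. bilin_ext f u v)"
  by (simp add: bilin_ext_alt linmap_def lin_ext_add lin_ext_smult lin_ext_fun_add lin_ext_fun_smult)
lemma bilin_single [simp]: "bilin_ext f (Poly_Mapping.single x 1) (Poly_Mapping.single y 1) = f x y"
  by (simp add: bilin_ext_alt)
lemma bilin_comm: "(\<And>x y. f x y = f y x) \<Longrightarrow> bilin_ext f u v = bilin_ext f v u"
  unfolding bilin_ext_def by (subst sum.swap) (simp add: mult.commute)

lemma bilin_eqI:
  assumes "\<And>v. linmap (\<lambda>u. B1 u v)" "\<And>u. linmap (B1 u)" "\<And>v. linmap (\<lambda>u. B2 u v)" "\<And>u. linmap (B2 u)"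
    "\<And>x y. x \<in> Poly_Mapping.keys u \<Longrightarrow> y \<in> Poly_Mapping.keys v \<Longrightarrow>
       B1 (Poly_Mapping.single x 1) (Poly_Mapping.single y 1) = B2 (Poly_Mapping.single x 1) (Poly_Mapping.single y 1)"
  shows "B1 u v = B2 u v"
  apply (rule linmap_eqI[of "\<lambda>u. B1 u v" "\<lambda>u. B2 u v", OF assms(1,3)])
  apply (rule linmap_eqI[OF assms(2,4)])
  using assms(5) by blast

lemma linmap_tens1: "linmap (\<lambda>u. tens u v)" unfolding tens_def by (rule linmap_bilin1)
lemma linmap_tens2: "linmap (tens u)" unfolding tens_def by (rule linmap_bilin2)
lemma linmap_bullet1: "linmap (\<lambda>u. bullet u v)" unfolding bullet_def by (rule linmap_bilin1)
lemma linmap_bullet2: "linmap (bullet u)" unfolding bullet_def by (rule linmap_bilin2)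
lemma linmap_mult2_1: "linmap (\<lambda>u. mult2 u v)" unfolding mult2_def by (rule linmap_bilin1)
lemma linmap_mult2_2: "linmap (mult2 u)" unfolding mult2_def by (rule linmap_bilin2)
lemma linmap_diamond1: "linmap (\<lambda>u. diamond u v)" unfolding diamond_def by (rule linmap_bilin1)
lemma linmap_diamond2: "linmap (diamond u)" unfolding diamond_def by (rule linmap_bilin2)
lemma linmap_id_Pr: "linmap id_Pr" unfolding id_Pr_def by (rule linmap_lin_ext)
lemma linmap_emb2: "linmap emb2" unfolding emb2_def by (rule linmap_lin_ext)
lemma linmap_prepend: "linmap (prepend c)" unfolding prepend_def by (rule linmap_lin_ext)
lemma linmap_Pr: "linmap Pr" unfolding Pr_def by (rule linmap_prepend)
lemma linmap_DeltaT: "linmap (DeltaT D)" unfolding DeltaT_def by (rule linmap_lin_ext)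

lemma tens_single [simp]: "tens (Poly_Mapping.single x 1) (Poly_Mapping.single y 1) = Poly_Mapping.single (x, y) 1"
  by (simp add: tens_def)
lemma bullet_single [simp]: "bullet (Poly_Mapping.single (x, y) 1) (Poly_Mapping.single (x', y') 1) = tens (dia x x') (dia y y')"
  by (simp add: bullet_def)
lemma mult2_single [simp]: "mult2 (Poly_Mapping.single (x, y) 1) (Poly_Mapping.single (x', y') 1) = Poly_Mapping.single (x * x', y * y') 1"
  by (simp add: mult2_def)
lemma emb2_single [simp]: "emb2 (Poly_Mapping.single (a, b) 1) = Poly_Mapping.single ([a], [b]) 1"
  by (simp add: emb2_def)
lemma id_Pr_single [simp]: "id_Pr (Poly_Mapping.single (x, y) 1) = Poly_Mapping.single (x, 1 # y) 1"
  by (simp add: id_Pr_def)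
lemma prepend_single [simp]: "prepend c (Poly_Mapping.single x 1) = Poly_Mapping.single (c # x) 1"
  by (simp add: prepend_def)
lemma diamond_single [simp]: "diamond (Poly_Mapping.single x 1) (Poly_Mapping.single y 1) = dia x y"
  by (simp add: diamond_def)

lemma tens_Ssh1: "u \<in> Ssh scale \<Longrightarrow> tens u v \<in> Ssh2 scale"
proof -
  assume u: "u \<in> Ssh scale"
  have "tens u v = lin_ext (\<lambda>y. tens u (Poly_Mapping.single y 1)) v"
    by (rule linmap_basis[OF linmap_tens2])
  also have "\<dots> \<in> Ssh2 scale"
    unfolding Ssh2_def
  proof (rule submod_lin_ext)
    fix y
    have "tens u (Poly_Mapping.single y 1) = rn (\<lambda>x. (x, y)) u"
      by (rule linmap_eqI[OF linmap_tens1]) (auto simp: rn_def linmap_lin_ext)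
    also have "\<dots> \<in> submod (\<Union>F\<in>slots_sh2. slot_gens scale F)"
      using u unfolding Ssh_def
      apply (rule rn_submod[rotated])
      unfolding slots_sh_def o_def using slots_sh2_mem1 by auto
    finally show "tens u (Poly_Mapping.single y 1) \<in> submod (\<Union>F\<in>slots_sh2. slot_gens scale F)" .
  qed
  finally show ?thesis .
qed

lemma tens_Ssh2: "v \<in> Ssh scale \<Longrightarrow> tens u v \<in> Ssh2 scale"
proof -
  assume v: "v \<in> Ssh scale"
  have "tens u v = lin_ext (\<lambda>x. tens (Poly_Mapping.single x 1) v) u"
    by (rule linmap_basis[OF linmap_tens1])
  also have "\<dots> \<in> Ssh2 scale"
    unfolding Ssh2_def
  proof (rule submod_lin_ext)
    fix x
    have "tens (Poly_Mapping.single x 1) v = rn (\<lambda>y. (x, y)) v"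
      by (rule linmap_eqI[OF linmap_tens2]) (auto simp: rn_def linmap_lin_ext)
    also have "\<dots> \<in> submod (\<Union>F\<in>slots_sh2. slot_gens scale F)"
      using v unfolding Ssh_def
      apply (rule rn_submod[rotated])
      unfolding slots_sh_def o_def using slots_sh2_mem2 by auto
    finally show "tens (Poly_Mapping.single x 1) v \<in> submod (\<Union>F\<in>slots_sh2. slot_gens scale F)" .
  qed
  finally show ?thesis .
qed

lemma dia_Nil2 [simp]: "dia ys [] = 0"
  by (cases ys) auto

lemma dia_comm: "dia x y = dia y x"
  by (induction x y rule: dia.induct) (auto simp: mult.commute add.commute)

lemma bullet_comm: "bullet u v = bullet v u"
  unfolding bullet_def by (rule bilin_comm) (auto simp: dia_comm)

definition supp_in :: "('x \<Rightarrow> bool) \<Rightarrow> ('x \<Rightarrow>\<^sub>0 'k::comm_ring_1) \<Rightarrow> bool" where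
  "supp_in P v \<longleftrightarrow> (\<forall>x\<in>Poly_Mapping.keys v. P x)"

lemma supp_in_lin_ext: "(\<And>x. x \<in> Poly_Mapping.keys v \<Longrightarrow> supp_in P (f x)) \<Longrightarrow> supp_in P (lin_ext f v)"
  unfolding supp_in_def lin_ext_def
  using keys_sum keys_smult by fastforce
lemma supp_in_add: "supp_in P u \<Longrightarrow> supp_in P v \<Longrightarrow> supp_in P (u + v)"
  unfolding supp_in_def using keys_add by fastforce
lemma supp_in_diff: "supp_in P u \<Longrightarrow> supp_in P v \<Longrightarrow> supp_in P (u - v)"
  unfolding supp_in_def using keys_diff by fastforce
lemma supp_in_single: "P x \<Longrightarrow> supp_in P (Poly_Mapping.single x c)"
  by (simp add: supp_in_def)
lemma supp_in_zero [simp]: "supp_in P 0" by (simp add: supp_in_def)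
lemma supp_in_mono: "supp_in P v \<Longrightarrow> (\<And>x. P x \<Longrightarrow> Q x) \<Longrightarrow> supp_in Q v"
  by (auto simp: supp_in_def)

lemma supp_in_prepend_ne: "supp_in (\<lambda>l. l \<noteq> []) (prepend c W)"
  unfolding prepend_def by (rule supp_in_lin_ext) (auto intro!: supp_in_single)

lemma dia_ne: "supp_in (\<lambda>l. l \<noteq> []) (dia x y)"
  by (induction x y rule: dia.induct) (auto intro!: supp_in_single simp: supp_in_prepend_ne)



lemma linmap_add: "linmap L \<Longrightarrow> L (u + v) = L u + L v" by (simp add: linmap_def)
lemma linmap_smult: "linmap L \<Longrightarrow> L (smult_fm c u) = smult_fm c (L u)" by (simp add: linmap_def)

lemma dia_long: "u \<noteq> [] \<Longrightarrow> v \<noteq> [] \<Longrightarrow>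
  dia (a # u) (b # v) = prepend (a * b) (dia u (1 # v) + dia (1 # u) v - Pr (dia u v))"
  by (cases u; cases v) auto
lemma dia_single_l: "dia [c] (b # v) = Poly_Mapping.single (c * b # v) 1"
  by (cases v) auto
lemma dia_single_r: "dia (b # v) [c] = Poly_Mapping.single (b * c # v) 1"
  by (cases v) auto

lemma single_smult1: "Poly_Mapping.single x c = smult_fm c (Poly_Mapping.single x 1)"
  by (simp add: smult_single)

lemma scale_mult: "comm_k_algebra scale \<Longrightarrow> z * scale c a = scale c (z * a)"
  unfolding comm_k_algebra_def by (metis mult.commute)

lemma gen_add: "Poly_Mapping.single (xs @ (a + b) # ys) 1 - Poly_Mapping.single (xs @ a # ys) 1
   - Poly_Mapping.single (xs @ b # ys) 1 \<in> Ssh scale"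
  unfolding Ssh_def
  apply (rule submod.gen)
  apply (rule UN_I[OF slots_sh_mem[of xs ys]])
  unfolding slot_gens_def by blast

lemma gen_scale: "Poly_Mapping.single (xs @ scale c a # ys) 1 - smult_fm c (Poly_Mapping.single (xs @ a # ys) 1) \<in> Ssh scale"
  unfolding Ssh_def smult_single
  apply (rule submod.gen)
  apply (rule UN_I[OF slots_sh_mem[of xs ys]])
  unfolding slot_gens_def by auto

lemma prepend_add: "prepend (a + b) W - prepend a W - prepend b W \<in> Ssh scale"
proof -
  have "prepend (a + b) W - prepend a W - prepend b W =
    lin_ext (\<lambda>w. Poly_Mapping.single ((a + b) # w) 1 - Poly_Mapping.single (a # w) 1 - Poly_Mapping.single (b # w) 1) W"
    by (simp add: prepend_def lin_ext_fun_diff)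
  also have "\<dots> \<in> Ssh scale"
    unfolding Ssh_def by (rule submod_lin_ext) (use gen_add[of "[]"] in \<open>simp add: Ssh_def\<close>)
  finally show ?thesis .
qed

lemma prepend_scale: "prepend (scale c a) W - smult_fm c (prepend a W) \<in> Ssh scale"
proof -
  have "prepend (scale c a) W - smult_fm c (prepend a W) =
    lin_ext (\<lambda>w. Poly_Mapping.single (scale c a # w) 1 - smult_fm c (Poly_Mapping.single (a # w) 1)) W"
    by (simp add: prepend_def lin_ext_fun_diff lin_ext_fun_smult)
  also have "\<dots> \<in> Ssh scale"
    unfolding Ssh_def by (rule submod_lin_ext) (use gen_scale[of "[]"] in \<open>simp add: Ssh_def\<close>)
  finally show ?thesis .
qed

lemma Ssh_zero: "0 \<in> Ssh scale" by (simp add: Ssh_def submod.zero)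
lemma Ssh_add: "u \<in> Ssh scale \<Longrightarrow> v \<in> Ssh scale \<Longrightarrow> u + v \<in> Ssh scale"
  by (simp add: Ssh_def submod.add)
lemma Ssh_diff: "u \<in> Ssh scale \<Longrightarrow> v \<in> Ssh scale \<Longrightarrow> u - v \<in> Ssh scale"
  by (simp add: Ssh_def submod_diff)

lemma dia_resp:
  fixes scale :: "'k::comm_ring_1 \<Rightarrow> 'a::comm_ring_1 \<Rightarrow> 'a"
  assumes alg: "comm_k_algebra scale"
  shows "dia zs (xs @ (a + b) # ys) - dia zs (xs @ a # ys) - dia zs (xs @ b # ys) \<in> Ssh scale \<and>
         dia zs (xs @ scale c a # ys) - smult_fm c (dia zs (xs @ a # ys)) \<in> Ssh scale"
proof (induction "length zs + length xs" arbitrary: zs xs rule: less_induct)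
  case less
  show ?case
  proof (cases zs)
    case Nil then show ?thesis by (simp add: Ssh_zero)
  next
    case (Cons z u)
    show ?thesis
    proof (cases u)
      case Nil
      show ?thesis
      proof (cases xs)
        case Nil
        show ?thesis using gen_add[of "[]" "z * a" "z * b" ys scale] gen_scale[where xs="[]" and c=c and a="z * a" and ys=ys and scale=scale]
          by (simp add: \<open>zs = z # u\<close> \<open>u = []\<close> Nil dia_single_l distrib_left scale_mult[OF alg])
      next
        case (Cons x1 xs')
        show ?thesis using gen_add[of "z * x1 # xs'" a b ys scale] gen_scale[where xs="z * x1 # xs'" and c=c and a=a and ys=ys and scale=scale]
          by (simp add: \<open>zs = z # u\<close> \<open>u = []\<close> Cons dia_single_l)
      qed
    next
      case (Cons z' zs')
      have une: "u \<noteq> []" using Cons by simp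
      show ?thesis
      proof (cases xs)
        case Nil
        show ?thesis
        proof (cases ys)
          case Nil
          show ?thesis using gen_add[of "[]" "z * a" "z * b" u scale] gen_scale[where xs="[]" and c=c and a="z * a" and ys=u and scale=scale]
            by (simp add: \<open>zs = z # u\<close> \<open>xs = []\<close> Nil dia_single_r mult.commute[of _ z] distrib_left scale_mult[OF alg])
        next
          case (Cons y ys')
          define W :: "'a list \<Rightarrow>\<^sub>0 'k" where "W = dia u (1 # ys) + dia (1 # u) ys - Pr (dia u ys)"
          have e: "dia zs (xs @ \<alpha> # ys) = prepend (z * \<alpha>) W" for \<alpha>
            using dia_long[OF une, of ys z \<alpha>] Cons by (simp add: \<open>zs = z # u\<close> \<open>xs = []\<close> W_def)
          show ?thesis
            using prepend_add[of "z * a" "z * b" W scale] prepend_scale[of scale c "z * a" W]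
            by (simp add: e distrib_left scale_mult[OF alg])
        qed
      next
        case (Cons x1 xs')
        define W :: "'a \<Rightarrow> 'a list \<Rightarrow>\<^sub>0 'k" where "W \<alpha> = dia u (1 # (xs' @ \<alpha> # ys)) + dia (1 # u) (xs' @ \<alpha> # ys) - Pr (dia u (xs' @ \<alpha> # ys))" for \<alpha>
        have e: "dia zs (xs @ \<alpha> # ys) = prepend (z * x1) (W \<alpha>)" for \<alpha>
          using dia_long[OF une, of "xs' @ \<alpha> # ys" z x1] by (simp add: \<open>zs = z # u\<close> Cons W_def)
        have IH1: "dia u ((1#xs') @ (a + b) # ys) - dia u ((1#xs') @ a # ys) - dia u ((1#xs') @ b # ys) \<in> Ssh scale \<and>
          dia u ((1#xs') @ scale c a # ys) - smult_fm c (dia u ((1#xs') @ a # ys)) \<in> Ssh scale"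
          by (rule less) (simp add: \<open>zs = z # u\<close> Cons)
        have IH2: "dia (1#u) (xs' @ (a + b) # ys) - dia (1#u) (xs' @ a # ys) - dia (1#u) (xs' @ b # ys) \<in> Ssh scale \<and>
          dia (1#u) (xs' @ scale c a # ys) - smult_fm c (dia (1#u) (xs' @ a # ys)) \<in> Ssh scale"
          by (rule less) (simp add: \<open>zs = z # u\<close> Cons)
        have IH3: "dia u (xs' @ (a + b) # ys) - dia u (xs' @ a # ys) - dia u (xs' @ b # ys) \<in> Ssh scale \<and>
          dia u (xs' @ scale c a # ys) - smult_fm c (dia u (xs' @ a # ys)) \<in> Ssh scale"
          by (rule less) (simp add: \<open>zs = z # u\<close> Cons)
        have LP: "linmap (prepend (z * x1))" by (rule linmap_prepend)
        have LPr: "linmap Pr" by (rule linmap_Pr)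
        have s1: "W (a + b) - W a - W b =
          (dia u ((1#xs') @ (a + b) # ys) - dia u ((1#xs') @ a # ys) - dia u ((1#xs') @ b # ys))
          + (dia (1#u) (xs' @ (a + b) # ys) - dia (1#u) (xs' @ a # ys) - dia (1#u) (xs' @ b # ys))
          - Pr (dia u (xs' @ (a + b) # ys) - dia u (xs' @ a # ys) - dia u (xs' @ b # ys))"
          by (simp add: W_def linmap_diff[OF LPr] linmap_add[OF LPr] algebra_simps)
        have s2: "W (scale c a) - smult_fm c (W a) =
          (dia u ((1#xs') @ scale c a # ys) - smult_fm c (dia u ((1#xs') @ a # ys)))
          + (dia (1#u) (xs' @ scale c a # ys) - smult_fm c (dia (1#u) (xs' @ a # ys)))
          - Pr (dia u (xs' @ scale c a # ys) - smult_fm c (dia u (xs' @ a # ys)))"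
          by (simp add: W_def linmap_diff[OF LPr] smult_add_right smult_diff_right linmap_smult[OF LPr] algebra_simps)
        have "W (a + b) - W a - W b \<in> Ssh scale"
          unfolding s1 using IH1 IH2 IH3 by (blast intro: Ssh_add Ssh_diff Pr_Ssh)
        moreover have "W (scale c a) - smult_fm c (W a) \<in> Ssh scale"
          unfolding s2 using IH1 IH2 IH3 by (blast intro: Ssh_add Ssh_diff Pr_Ssh)
        ultimately show ?thesis
          by (simp add: e linmap_diff[OF LP, symmetric] prepend_Ssh linmap_smult[OF LP, symmetric])
      qed
    qed
  qed
qed



lemma linmap_plus: "linmap L \<Longrightarrow> linmap M \<Longrightarrow> linmap (\<lambda>v. L v + M v)"
  by (simp add: linmap_def smult_add_right algebra_simps)
lemma linmap_minus: "linmap L \<Longrightarrow> linmap M \<Longrightarrow> linmap (\<lambda>v. L v - M v)"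
  by (simp add: linmap_def smult_diff_right algebra_simps)
lemma linmap_ident: "linmap (\<lambda>v. v)" by (simp add: linmap_def)

lemma linmap_submod: "linmap L \<Longrightarrow> (\<And>x. x \<in> Poly_Mapping.keys v \<Longrightarrow> L (Poly_Mapping.single x 1) \<in> submod G) \<Longrightarrow> L v \<in> submod G"
  by (subst linmap_basis, assumption) (rule submod_lin_ext)

lemmas lin_simps =
  linmap_add[OF linmap_bullet1] linmap_add[OF linmap_bullet2] linmap_smult[OF linmap_bullet1] linmap_smult[OF linmap_bullet2]
  linmap_diff[OF linmap_bullet1] linmap_diff[OF linmap_bullet2]
  linmap_add[OF linmap_tens1] linmap_add[OF linmap_tens2] linmap_smult[OF linmap_tens1] linmap_smult[OF linmap_tens2]
  linmap_diff[OF linmap_tens1] linmap_diff[OF linmap_tens2]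
  linmap_add[OF linmap_mult2_1] linmap_add[OF linmap_mult2_2] linmap_smult[OF linmap_mult2_1] linmap_smult[OF linmap_mult2_2]
  linmap_diff[OF linmap_mult2_1] linmap_diff[OF linmap_mult2_2]
  linmap_add[OF linmap_id_Pr] linmap_smult[OF linmap_id_Pr] linmap_diff[OF linmap_id_Pr]
  linmap_add[OF linmap_emb2] linmap_smult[OF linmap_emb2] linmap_diff[OF linmap_emb2]
  linmap_add[OF linmap_Pr] linmap_smult[OF linmap_Pr] linmap_diff[OF linmap_Pr]
  linmap_add[OF linmap_prepend] linmap_smult[OF linmap_prepend] linmap_diff[OF linmap_prepend]
  linmap_add[OF linmap_DeltaT] linmap_smult[OF linmap_DeltaT] linmap_diff[OF linmap_DeltaT]
  lin_ext_add lin_ext_smult lin_ext_diff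

lemma Ssh2_zero: "0 \<in> Ssh2 scale" by (simp add: Ssh2_def submod.zero)
lemma Ssh2_add: "u \<in> Ssh2 scale \<Longrightarrow> v \<in> Ssh2 scale \<Longrightarrow> u + v \<in> Ssh2 scale"
  by (simp add: Ssh2_def submod.add)
lemma Ssh2_diff: "u \<in> Ssh2 scale \<Longrightarrow> v \<in> Ssh2 scale \<Longrightarrow> u - v \<in> Ssh2 scale"
  by (simp add: Ssh2_def submod_diff)
lemma Ssh2_uminus: "u \<in> Ssh2 scale \<Longrightarrow> - u \<in> Ssh2 scale"
  by (simp add: Ssh2_def submod_uminus)

lemma bullet_Ssh2_1:
  fixes scale :: "'k::comm_ring_1 \<Rightarrow> 'a::comm_ring_1 \<Rightarrow> 'a"
  assumes alg: "comm_k_algebra scale" and u: "u \<in> Ssh2 scale"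
  shows "bullet u v \<in> Ssh2 scale"
proof -
  have "bullet u v = lin_ext (\<lambda>q. bullet u (Poly_Mapping.single q 1)) v"
    by (rule linmap_basis[OF linmap_bullet2])
  also have "\<dots> \<in> Ssh2 scale"
    unfolding Ssh2_def
  proof (rule submod_lin_ext)
    fix q :: "'a list \<times> 'a list"
    obtain x' y' where q: "q = (x', y')" by (cases q)
    have "bullet u (Poly_Mapping.single (x', y') 1) \<in> submod (\<Union>F\<in>slots_sh2. slot_gens scale F)"
    proof (rule submod_linmap[OF linmap_bullet1 _ u[unfolded Ssh2_def]])
      fix g assume "g \<in> (\<Union>F\<in>slots_sh2. slot_gens scale F)"
      then obtain F where F: "F \<in> slots_sh2" and g: "g \<in> slot_gens scale F" by blast
      from g obtain a b c where g': "g = Poly_Mapping.single (F (a + b)) 1 - Poly_Mapping.single (F a) 1 - Poly_Mapping.single (F b) 1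
         \<or> g = Poly_Mapping.single (F (scale c a)) 1 - smult_fm c (Poly_Mapping.single (F a) 1)"
        unfolding slot_gens_def by (auto simp: smult_single)
      from F consider xs ys zs where "F = (\<lambda>a. (xs @ a # ys, zs))" | xs ys zs where "F = (\<lambda>a. (zs, xs @ a # ys))"
        by (auto simp: slots_sh2_def)
      then have "bullet g (Poly_Mapping.single (x', y') 1) \<in> Ssh2 scale"
      proof cases
        case (1 xs ys zs)
        have r: "dia x' (xs @ (a + b) # ys) - dia x' (xs @ a # ys) - dia x' (xs @ b # ys) \<in> Ssh scale \<and>
           dia x' (xs @ scale c a # ys) - smult_fm c (dia x' (xs @ a # ys)) \<in> Ssh scale"
          by (rule dia_resp[OF alg])
        from g' show ?thesis
        proof
          assume g: "g = Poly_Mapping.single (F (a + b)) 1 - Poly_Mapping.single (F a) 1 - Poly_Mapping.single (F b) 1"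
          have "bullet g (Poly_Mapping.single (x', y') 1) = tens (dia x' (xs @ (a + b) # ys) - dia x' (xs @ a # ys) - dia x' (xs @ b # ys)) (dia zs y')"
            by (simp add: g 1 lin_simps dia_comm[of x'])
          then show ?thesis using r tens_Ssh1 by metis
        next
          assume g: "g = Poly_Mapping.single (F (scale c a)) 1 - smult_fm c (Poly_Mapping.single (F a) 1)"
          have "bullet g (Poly_Mapping.single (x', y') 1) = tens (dia x' (xs @ scale c a # ys) - smult_fm c (dia x' (xs @ a # ys))) (dia zs y')"
            by (simp add: g 1 lin_simps dia_comm[of x'])
          then show ?thesis using r tens_Ssh1 by metis
        qed
      next
        case (2 xs ys zs)
        have r: "dia y' (xs @ (a + b) # ys) - dia y' (xs @ a # ys) - dia y' (xs @ b # ys) \<in> Ssh scale \<and>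
           dia y' (xs @ scale c a # ys) - smult_fm c (dia y' (xs @ a # ys)) \<in> Ssh scale"
          by (rule dia_resp[OF alg])
        from g' show ?thesis
        proof
          assume g: "g = Poly_Mapping.single (F (a + b)) 1 - Poly_Mapping.single (F a) 1 - Poly_Mapping.single (F b) 1"
          have "bullet g (Poly_Mapping.single (x', y') 1) = tens (dia zs x') (dia y' (xs @ (a + b) # ys) - dia y' (xs @ a # ys) - dia y' (xs @ b # ys))"
            by (simp add: g 2 lin_simps dia_comm[of y'])
          then show ?thesis using r tens_Ssh2 by metis
        next
          assume g: "g = Poly_Mapping.single (F (scale c a)) 1 - smult_fm c (Poly_Mapping.single (F a) 1)"
          have "bullet g (Poly_Mapping.single (x', y') 1) = tens (dia zs x') (dia y' (xs @ scale c a # ys) - smult_fm c (dia y' (xs @ a # ys)))"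
            by (simp add: g 2 lin_simps dia_comm[of y'])
          then show ?thesis using r tens_Ssh2 by metis
        qed
      qed
      then show "bullet g (Poly_Mapping.single (x', y') 1) \<in> submod (\<Union>F\<in>slots_sh2. slot_gens scale F)"
        by (simp add: Ssh2_def)
    qed
    then show "bullet u (Poly_Mapping.single q 1) \<in> submod (\<Union>F\<in>slots_sh2. slot_gens scale F)"
      by (simp add: q)
  qed
  finally show ?thesis .
qed

lemma bullet_Ssh2_2:
  fixes scale :: "'k::comm_ring_1 \<Rightarrow> 'a::comm_ring_1 \<Rightarrow> 'a"
  assumes alg: "comm_k_algebra scale" and u: "u \<in> Ssh2 scale"
  shows "bullet v u \<in> Ssh2 scale"
  by (subst bullet_comm) (rule bullet_Ssh2_1[OF assms])



definition ne2 :: "'a list \<times> 'a list \<Rightarrow> bool" where "ne2 p \<longleftrightarrow> fst p \<noteq> [] \<and> snd p \<noteq> []"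
abbreviation ne1 :: "'a list \<Rightarrow> bool" where "ne1 l \<equiv> l \<noteq> []"

lemma supp_in_keys: "supp_in P v \<Longrightarrow> x \<in> Poly_Mapping.keys v \<Longrightarrow> P x"
  by (simp add: supp_in_def)

lemma supp_tens: "supp_in P u \<Longrightarrow> supp_in Q v \<Longrightarrow> supp_in (\<lambda>p. P (fst p) \<and> Q (snd p)) (tens u v)"
  unfolding tens_def bilin_ext_alt
  by (intro supp_in_lin_ext supp_in_single) (auto simp: supp_in_def)

lemma supp_bullet: "supp_in ne2 (bullet u v)"
  unfolding bullet_def bilin_ext_alt
proof (intro supp_in_lin_ext)
  fix x y :: "'a list \<times> 'a list"
  obtain a b where x: "x = (a, b)" by (cases x)
  obtain c d where y: "y = (c, d)" by (cases y)
  show "supp_in ne2 ((case x of (xs, ys) \<Rightarrow> \<lambda>(xs', ys'). tens (dia xs xs') (dia ys ys')) y)"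
    unfolding x y using supp_tens[OF dia_ne dia_ne] by (simp add: ne2_def[abs_def])
qed

lemma supp_emb2: "supp_in ne2 (emb2 A)"
  unfolding emb2_def by (intro supp_in_lin_ext) (auto intro!: supp_in_single simp: ne2_def)

lemma supp_id_Pr: "supp_in ne2 Z \<Longrightarrow> supp_in ne2 (id_Pr Z)"
  unfolding id_Pr_def by (intro supp_in_lin_ext) (auto intro!: supp_in_single simp: ne2_def supp_in_def)

lemma DB_ne: "supp_in ne2 (DeltaT_basis D x)"
  by (induction D x rule: DeltaT_basis.induct) (auto simp: supp_emb2 supp_id_Pr supp_bullet)

lemma DeltaT_ne: "supp_in ne2 (DeltaT D v)"
  unfolding DeltaT_def by (intro supp_in_lin_ext DB_ne)

lemma ne2_keys: "supp_in ne2 Z \<Longrightarrow> p \<in> Poly_Mapping.keys Z \<Longrightarrow> \<exists>a as b bs. p = (a # as, b # bs)"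
  by (cases p) (auto dest!: supp_in_keys simp: ne2_def neq_Nil_conv)

lemma DeltaT_single [simp]: "DeltaT D (Poly_Mapping.single x 1) = DeltaT_basis D x"
  by (simp add: DeltaT_def)

lemma bullet_unit: "supp_in ne2 Z \<Longrightarrow> bullet (Poly_Mapping.single ([1], [1]) 1) Z = Z"
  by (rule linmap_eqI[OF linmap_bullet2 linmap_ident], drule (1) ne2_keys) (auto simp: dia_single_l)

lemma DeltaT_Pr: "supp_in ne1 Z \<Longrightarrow> DeltaT D (Pr Z) = id_Pr (DeltaT D Z)"
  apply (rule linmap_eqI[OF linmap_comp[OF linmap_DeltaT linmap_Pr] linmap_comp[OF linmap_id_Pr linmap_DeltaT]])
  apply (drule (1) supp_in_keys)
  apply (auto simp: Pr_def neq_Nil_conv)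
  done

lemma id_Pr_tens: "id_Pr (tens A B) = tens A (Pr B)"
  by (rule bilin_eqI[of "\<lambda>A B. id_Pr (tens A B)" "\<lambda>A B. tens A (Pr B)"])
     (simp_all add: linmap_def lin_simps, simp add: Pr_def)

lemma nijenhuis:
  assumes "supp_in ne2 U" "supp_in ne2 V"
  shows "id_Pr (bullet U (id_Pr V) + bullet (id_Pr U) V - id_Pr (bullet U V)) = bullet (id_Pr U) (id_Pr V)"
proof (rule bilin_eqI[of "\<lambda>U V. id_Pr (bullet U (id_Pr V) + bullet (id_Pr U) V - id_Pr (bullet U V))"
      "\<lambda>U V. bullet (id_Pr U) (id_Pr V)"])
  fix x y assume x: "x \<in> Poly_Mapping.keys U" and y: "y \<in> Poly_Mapping.keys V"
  obtain x1 y1 where xx: "x = (x1, y1)" and y1: "y1 \<noteq> []" using ne2_keys[OF assms(1) x] by auto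
  obtain x2 y2 where yy: "y = (x2, y2)" and y2: "y2 \<noteq> []" using ne2_keys[OF assms(2) y] by auto
  have d: "dia (1 # y1) (1 # y2) = Pr (dia y1 (1 # y2) + dia (1 # y1) y2 - Pr (dia y1 y2))"
    using dia_long[OF y1 y2, of 1 1] by (simp add: Pr_def)
  show "id_Pr (bullet (Poly_Mapping.single x 1) (id_Pr (Poly_Mapping.single y 1)) + bullet (id_Pr (Poly_Mapping.single x 1)) (Poly_Mapping.single y 1) -
           id_Pr (bullet (Poly_Mapping.single x 1) (Poly_Mapping.single y 1))) =
          bullet (id_Pr (Poly_Mapping.single x 1)) (id_Pr (Poly_Mapping.single y 1))"
    by (simp add: xx yy d id_Pr_tens lin_simps)
qed (simp_all add: linmap_def lin_simps smult_add_right smult_diff_right algebra_simps)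



lemma emb2_mult2: "bullet (emb2 A) (emb2 B) = emb2 (mult2 A B)"
proof (rule bilin_eqI[of "\<lambda>A B. bullet (emb2 A) (emb2 B)" "\<lambda>A B. emb2 (mult2 A B)"])
  fix x y :: "'a \<times> 'a"
  obtain p q where x: "x = (p, q)" by (cases x)
  obtain p' q' where y: "y = (p', q')" by (cases y)
  show "bullet (emb2 (Poly_Mapping.single x 1)) (emb2 (Poly_Mapping.single y 1)) = emb2 (mult2 (Poly_Mapping.single x 1) (Poly_Mapping.single y 1))"
    by (simp add: x y)
qed (simp_all add: linmap_def lin_simps)

lemma emb2_assoc:
  assumes Z: "supp_in ne2 Z"
  shows "bullet (emb2 A) (bullet (emb2 B) Z) = bullet (emb2 (mult2 A B)) Z"
proof (rule linmap_eqI[OF linmap_comp[OF linmap_bullet2 linmap_bullet2] linmap_bullet2])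
  fix z assume "z \<in> Poly_Mapping.keys Z"
  then obtain r1 rs s1 ss where z: "z = (r1 # rs, s1 # ss)" using ne2_keys[OF Z] by blast
  show "bullet (emb2 A) (bullet (emb2 B) (Poly_Mapping.single z 1)) = bullet (emb2 (mult2 A B)) (Poly_Mapping.single z 1)"
  proof (rule bilin_eqI[of "\<lambda>A B. bullet (emb2 A) (bullet (emb2 B) (Poly_Mapping.single z 1))" "\<lambda>A B. bullet (emb2 (mult2 A B)) (Poly_Mapping.single z 1)"])
    fix x y :: "'a \<times> 'a"
    obtain p q where x: "x = (p, q)" by (cases x)
    obtain p' q' where y: "y = (p', q')" by (cases y)
    show "bullet (emb2 (Poly_Mapping.single x 1)) (bullet (emb2 (Poly_Mapping.single y 1)) (Poly_Mapping.single z 1)) =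
          bullet (emb2 (mult2 (Poly_Mapping.single x 1) (Poly_Mapping.single y 1))) (Poly_Mapping.single z 1)"
      by (simp add: x y z dia_single_l mult.assoc)
  qed (simp_all add: linmap_def lin_simps)
qed

lemma PL: "supp_in ne1 W \<Longrightarrow> lin_ext (dia [e]) (prepend a W) = prepend (e * a) W"
  apply (rule linmap_eqI[OF linmap_comp[OF linmap_lin_ext linmap_prepend] linmap_prepend])
  apply (drule (1) supp_in_keys)
  apply (auto simp: neq_Nil_conv dia_single_l)
  done

lemma supp_Pr: "supp_in ne1 (Pr W)"
  unfolding Pr_def by (rule supp_in_prepend_ne)

lemma DL: "dia (c * r1 # rs) (d * r1' # rs') = lin_ext (dia [c * d]) (dia (r1 # rs) (r1' # rs'))"
proof (cases "rs = []")
  case True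
  then show ?thesis by (cases rs') (auto simp: dia_single_l lin_ext_single mult_ac)
next
  case False
  note rs = this
  show ?thesis
  proof (cases "rs' = []")
    case True
    then show ?thesis using rs by (auto simp: dia_single_r neq_Nil_conv mult_ac)
  next
    case False
    have W: "supp_in ne1 (dia rs (1 # rs') + dia (1 # rs) rs' - Pr (dia rs rs'))"
      by (intro supp_in_diff supp_in_add dia_ne supp_Pr)
    show ?thesis using rs False by (simp add: dia_long PL[OF W] mult_ac)
  qed
qed

lemma BT: "bullet (Poly_Mapping.single (l, m) 1) (tens X Y) = tens (lin_ext (dia l) X) (lin_ext (dia m) Y)"
  by (rule bilin_eqI[of "\<lambda>X Y. bullet (Poly_Mapping.single (l, m) 1) (tens X Y)" "\<lambda>X Y. tens (lin_ext (dia l) X) (lin_ext (dia m) Y)"])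
    (simp_all add: linmap_def lin_simps)

lemma emb2_interchange:
  assumes P: "supp_in ne2 P" and Q: "supp_in ne2 Q"
  shows "bullet (bullet (emb2 A) P) (bullet (emb2 B) Q) = bullet (emb2 (mult2 A B)) (bullet P Q)"
proof (rule bilin_eqI[of "\<lambda>P Q. bullet (bullet (emb2 A) P) (bullet (emb2 B) Q)" "\<lambda>P Q. bullet (emb2 (mult2 A B)) (bullet P Q)"])
  fix z w assume zk: "z \<in> Poly_Mapping.keys P" and wk: "w \<in> Poly_Mapping.keys Q"
  obtain r1 rs s1 ss where z: "z = (r1 # rs, s1 # ss)" using ne2_keys[OF P zk] by blast
  obtain r1' rs' s1' ss' where w: "w = (r1' # rs', s1' # ss')" using ne2_keys[OF Q wk] by blast
  show "bullet (bullet (emb2 A) (Poly_Mapping.single z 1)) (bullet (emb2 B) (Poly_Mapping.single w 1)) =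
        bullet (emb2 (mult2 A B)) (bullet (Poly_Mapping.single z 1) (Poly_Mapping.single w 1))"
  proof (rule bilin_eqI[of "\<lambda>A B. bullet (bullet (emb2 A) (Poly_Mapping.single z 1)) (bullet (emb2 B) (Poly_Mapping.single w 1))"
        "\<lambda>A B. bullet (emb2 (mult2 A B)) (bullet (Poly_Mapping.single z 1) (Poly_Mapping.single w 1))"])
    fix x y :: "'a \<times> 'a"
    obtain p q where x: "x = (p, q)" by (cases x)
    obtain p' q' where y: "y = (p', q')" by (cases y)
    show "bullet (bullet (emb2 (Poly_Mapping.single x 1)) (Poly_Mapping.single z 1)) (bullet (emb2 (Poly_Mapping.single y 1)) (Poly_Mapping.single w 1)) =
          bullet (emb2 (mult2 (Poly_Mapping.single x 1) (Poly_Mapping.single y 1))) (bullet (Poly_Mapping.single z 1) (Poly_Mapping.single w 1))"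
      by (simp add: x y z w dia_single_l BT DL)
  qed (simp_all add: linmap_def lin_simps)
qed (simp_all add: linmap_def lin_simps)



definition eqv :: "('k::comm_ring_1 \<Rightarrow> 'a::comm_ring_1 \<Rightarrow> 'a) \<Rightarrow> ('a list \<times> 'a list \<Rightarrow>\<^sub>0 'k) \<Rightarrow> ('a list \<times> 'a list \<Rightarrow>\<^sub>0 'k) \<Rightarrow> bool" where
  "eqv scale u v \<longleftrightarrow> u - v \<in> Ssh2 scale"

lemma eqv_refl: "eqv scale u u" by (simp add: eqv_def Ssh2_zero)
lemma eqv_sym: "eqv scale u v \<Longrightarrow> eqv scale v u"
  unfolding eqv_def by (drule Ssh2_uminus) simp
lemma eqv_trans [trans]: "eqv scale u v \<Longrightarrow> eqv scale v w \<Longrightarrow> eqv scale u w"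
  unfolding eqv_def by (drule (1) Ssh2_add) simp
lemma eqv_add: "eqv scale u u' \<Longrightarrow> eqv scale v v' \<Longrightarrow> eqv scale (u + v) (u' + v')"
  unfolding eqv_def by (drule (1) Ssh2_add) (simp add: algebra_simps)
lemma eqv_diff: "eqv scale u u' \<Longrightarrow> eqv scale v v' \<Longrightarrow> eqv scale (u - v) (u' - v')"
  unfolding eqv_def by (drule (1) Ssh2_diff) (simp add: algebra_simps)
lemma eqv_id_Pr: "eqv scale u u' \<Longrightarrow> eqv scale (id_Pr u) (id_Pr u')"
  unfolding eqv_def by (drule id_Pr_Ssh2) (simp add: lin_simps)
lemma eqv_bullet1: "comm_k_algebra scale \<Longrightarrow> eqv scale u u' \<Longrightarrow> eqv scale (bullet u v) (bullet u' v)"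
  unfolding eqv_def by (drule (1) bullet_Ssh2_1[where v=v]) (simp add: lin_simps)
lemma eqv_bullet2: "comm_k_algebra scale \<Longrightarrow> eqv scale v v' \<Longrightarrow> eqv scale (bullet u v) (bullet u v')"
  unfolding eqv_def by (drule (1) bullet_Ssh2_2[where v=u]) (simp add: lin_simps)
lemma eqv_emb: "A - B \<in> S2 scale \<Longrightarrow> eqv scale (emb2 A) (emb2 B)"
  unfolding eqv_def by (drule emb2_Ssh2) (simp add: lin_simps)
lemma eqv_eq: "u = v \<Longrightarrow> eqv scale u v" by (simp add: eqv_refl)

locale lcb =
  fixes scale :: "'k::comm_ring_1 \<Rightarrow> 'a::comm_ring_1 \<Rightarrow> 'a"
    and D :: "'a \<Rightarrow> ('a \<times> 'a \<Rightarrow>\<^sub>0 'k)"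
    and \<epsilon> :: "'a \<Rightarrow> 'k"
  assumes bi: "left_counital_bialgebra scale D \<epsilon>"
begin

lemma alg: "comm_k_algebra scale"
  using bi by (simp add: left_counital_bialgebra_def)
lemma Dmult: "D (a * b) - mult2 (D a) (D b) \<in> S2 scale"
  using bi by (simp add: left_counital_bialgebra_def tensor_eq_def S2_def)
lemma D1: "D 1 - Poly_Mapping.single (1, 1) 1 \<in> S2 scale"
  using bi by (simp add: left_counital_bialgebra_def tensor_eq_def S2_def)

lemma H2b:
  assumes "w \<noteq> []"
  shows "eqv scale (DeltaT_basis D (c # w)) (bullet (emb2 (D c)) (id_Pr (DeltaT_basis D w)))"
proof -
  obtain w1 ws where w: "w = w1 # ws" using assms by (cases w) auto
  define Z where "Z = id_Pr (DeltaT_basis D w)"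
  have Z: "supp_in ne2 Z" unfolding Z_def by (intro supp_id_Pr DB_ne)
  show ?thesis
  proof (cases "c = 1")
    case True
    have "DeltaT_basis D (c # w) = bullet (emb2 (Poly_Mapping.single (1, 1) 1)) Z"
      using bullet_unit[OF Z] by (simp add: True w Z_def)
    also have "eqv scale \<dots> (bullet (emb2 (D c)) Z)"
      by (rule eqv_bullet1[OF alg], rule eqv_emb) (use submod_uminus[OF D1[unfolded S2_def]] in \<open>simp add: True S2_def\<close>)
    finally show ?thesis by (simp add: Z_def)
  next
    case False
    then show ?thesis by (simp add: w eqv_refl)
  qed
qed

lemma H2:
  assumes W: "supp_in ne1 W"
  shows "eqv scale (DeltaT D (prepend c W)) (bullet (emb2 (D c)) (id_Pr (DeltaT D W)))"
proof -
  have "DeltaT D (prepend c W) - bullet (emb2 (D c)) (id_Pr (DeltaT D W)) \<in> submod (\<Union>F\<in>slots_sh2. slot_gens scale F)"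
  proof (rule linmap_submod[where L="\<lambda>W. DeltaT D (prepend c W) - bullet (emb2 (D c)) (id_Pr (DeltaT D W))"])
    show "linmap (\<lambda>W. DeltaT D (prepend c W) - bullet (emb2 (D c)) (id_Pr (DeltaT D W)))"
      by (simp add: linmap_def lin_simps smult_diff_right algebra_simps)
  next
    fix w assume "w \<in> Poly_Mapping.keys W"
    then have "w \<noteq> []" using W by (simp add: supp_in_def)
    from H2b[OF this, of c] show "DeltaT D (prepend c (Poly_Mapping.single w 1)) - bullet (emb2 (D c)) (id_Pr (DeltaT D (Poly_Mapping.single w 1)))
          \<in> submod (\<Union>F\<in>slots_sh2. slot_gens scale F)"
      by (simp add: eqv_def Ssh2_def)
  qed
  then show ?thesis by (simp add: eqv_def Ssh2_def)
qed

lemma case2: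
  assumes v: "v \<noteq> []"
  shows "eqv scale (DeltaT D (dia [a] (b # v))) (bullet (DeltaT_basis D [a]) (DeltaT_basis D (b # v)))"
proof -
  define Z where "Z = id_Pr (DeltaT_basis D v)"
  have Z: "supp_in ne2 Z" unfolding Z_def by (intro supp_id_Pr DB_ne)
  have "DeltaT D (dia [a] (b # v)) = DeltaT_basis D (a * b # v)" by (simp add: dia_single_l)
  also have "eqv scale \<dots> (bullet (emb2 (D (a * b))) Z)" unfolding Z_def by (rule H2b[OF v])
  also have "eqv scale \<dots> (bullet (emb2 (mult2 (D a) (D b))) Z)" by (rule eqv_bullet1[OF alg eqv_emb[OF Dmult]])
  also have "\<dots> = bullet (emb2 (D a)) (bullet (emb2 (D b)) Z)" by (rule emb2_assoc[OF Z, symmetric])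
  also have "eqv scale \<dots> (bullet (emb2 (D a)) (DeltaT_basis D (b # v)))"
    by (rule eqv_bullet2[OF alg], rule eqv_sym) (unfold Z_def, rule H2b[OF v])
  finally show ?thesis by simp
qed

lemma main_basis: "x \<noteq> [] \<Longrightarrow> y \<noteq> [] \<Longrightarrow> eqv scale (DeltaT D (dia x y)) (bullet (DeltaT_basis D x) (DeltaT_basis D y))"
proof (induction x y rule: dia.induct)
  case (1 a b)
  have "DeltaT D (dia [a] [b]) = emb2 (D (a * b))" by simp
  also have "eqv scale \<dots> (emb2 (mult2 (D a) (D b)))" by (rule eqv_emb[OF Dmult])
  also have "\<dots> = bullet (DeltaT_basis D [a]) (DeltaT_basis D [b])" by (simp add: emb2_mult2)
  finally show ?case .
next
  case (2 a b b' bs)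
  then show ?case using case2[of "b' # bs" a b] by simp
next
  case (3 a a' as b)
  show ?case by (subst dia_comm, subst bullet_comm, rule case2) simp
next
  case (4 a a' as b b' bs)
  define u where "u = a' # as"
  define v where "v = b' # bs"
  define U where "U = DeltaT_basis D u"
  define V where "V = DeltaT_basis D v"
  have un: "u \<noteq> []" and vn: "v \<noteq> []" by (simp_all add: u_def v_def)
  have U: "supp_in ne2 U" and V: "supp_in ne2 V" by (simp_all add: U_def V_def DB_ne)
  define W :: "'a list \<Rightarrow>\<^sub>0 'k" where "W = dia u (1 # v) + dia (1 # u) v - Pr (dia u v)"
  have Wn: "supp_in ne1 W" unfolding W_def by (intro supp_in_diff supp_in_add dia_ne supp_Pr)
  have DB1: "DeltaT_basis D (1 # w) = id_Pr (DeltaT_basis D w)" if "w \<noteq> []" for w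
    using that by (cases w) auto
  have IH1: "eqv scale (DeltaT D (dia u (1 # v))) (bullet U (id_Pr V))"
    using "4.IH"(1) by (simp add: u_def v_def U_def V_def)
  have IH2: "eqv scale (DeltaT D (dia (1 # u) v)) (bullet (id_Pr U) V)"
    using "4.IH"(2) by (simp add: u_def v_def U_def V_def)
  have IH3: "eqv scale (DeltaT D (dia u v)) (bullet U V)"
    using "4.IH"(3) by (simp add: u_def v_def U_def V_def)
  have "DeltaT D (dia (a # a' # as) (b # b' # bs)) = DeltaT D (prepend (a * b) W)"
    by (simp add: W_def u_def v_def)
  also have "eqv scale \<dots> (bullet (emb2 (D (a * b))) (id_Pr (DeltaT D W)))" by (rule H2[OF Wn])
  also have "DeltaT D W = DeltaT D (dia u (1 # v)) + DeltaT D (dia (1 # u) v) - id_Pr (DeltaT D (dia u v))"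
    by (simp add: W_def lin_simps DeltaT_Pr[OF dia_ne])
  also have "eqv scale (bullet (emb2 (D (a * b))) (id_Pr \<dots>))
     (bullet (emb2 (D (a * b))) (id_Pr (bullet U (id_Pr V) + bullet (id_Pr U) V - id_Pr (bullet U V))))"
    by (intro eqv_bullet2[OF alg] eqv_id_Pr eqv_add eqv_diff IH1 IH2 IH3)
  also have "id_Pr (bullet U (id_Pr V) + bullet (id_Pr U) V - id_Pr (bullet U V)) = bullet (id_Pr U) (id_Pr V)"
    by (rule nijenhuis[OF U V])
  also have "eqv scale (bullet (emb2 (D (a * b))) (bullet (id_Pr U) (id_Pr V)))
      (bullet (emb2 (mult2 (D a) (D b))) (bullet (id_Pr U) (id_Pr V)))"
    by (rule eqv_bullet1[OF alg eqv_emb[OF Dmult]])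
  also have "\<dots> = bullet (bullet (emb2 (D a)) (id_Pr U)) (bullet (emb2 (D b)) (id_Pr V))"
    by (rule emb2_interchange[symmetric]) (intro supp_id_Pr U V)+
  also have "eqv scale \<dots> (bullet (DeltaT_basis D (a # u)) (bullet (emb2 (D b)) (id_Pr V)))"
    by (rule eqv_bullet1[OF alg], rule eqv_sym) (unfold U_def, rule H2b[OF un])
  also have "eqv scale \<dots> (bullet (DeltaT_basis D (a # u)) (DeltaT_basis D (b # v)))"
    by (rule eqv_bullet2[OF alg], rule eqv_sym) (unfold V_def, rule H2b[OF vn])
  finally show ?case by (simp add: u_def v_def)
qed auto

end



theorem proposition3p4:
  fixes scale :: "'k::comm_ring_1 \<Rightarrow> 'a::comm_ring_1 \<Rightarrow> 'a"
    and \<Delta> :: "'a \<Rightarrow> ('a \<times> 'a \<Rightarrow>\<^sub>0 'k)"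
    and \<epsilon> :: "'a \<Rightarrow> 'k"
    and x y :: "'a list \<Rightarrow>\<^sub>0 'k"
  assumes "left_counital_bialgebra scale \<Delta> \<epsilon>"
    and "sha_elem x" and "sha_elem y"
  shows "tensor_eq scale slots_sh2 (DeltaT \<Delta> (diamond x y)) (bullet (DeltaT \<Delta> x) (DeltaT \<Delta> y))"
proof -
  interpret lcb scale \<Delta> \<epsilon> by (rule lcb.intro) (rule assms(1))
  have "DeltaT \<Delta> (diamond x y) - bullet (DeltaT \<Delta> x) (DeltaT \<Delta> y) \<in> submod (\<Union>F\<in>slots_sh2. slot_gens scale F)"
  proof (rule linmap_submod[where L="\<lambda>x. DeltaT \<Delta> (diamond x y) - bullet (DeltaT \<Delta> x) (DeltaT \<Delta> y)"])
    show "linmap (\<lambda>x. DeltaT \<Delta> (diamond x y) - bullet (DeltaT \<Delta> x) (DeltaT \<Delta> y))"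
      by (simp add: linmap_def lin_simps linmap_add[OF linmap_diamond1] linmap_smult[OF linmap_diamond1]
          smult_diff_right algebra_simps)
  next
    fix xs assume "xs \<in> Poly_Mapping.keys x"
    then have xs: "xs \<noteq> []" using assms(2) by (simp add: sha_elem_def)
    show "DeltaT \<Delta> (diamond (Poly_Mapping.single xs 1) y) - bullet (DeltaT \<Delta> (Poly_Mapping.single xs 1)) (DeltaT \<Delta> y)
        \<in> submod (\<Union>F\<in>slots_sh2. slot_gens scale F)"
    proof (rule linmap_submod[where L="\<lambda>y. DeltaT \<Delta> (diamond (Poly_Mapping.single xs 1) y) - bullet (DeltaT \<Delta> (Poly_Mapping.single xs 1)) (DeltaT \<Delta> y)"])
      show "linmap (\<lambda>y. DeltaT \<Delta> (diamond (Poly_Mapping.single xs 1) y) - bullet (DeltaT \<Delta> (Poly_Mapping.single xs 1)) (DeltaT \<Delta> y))"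
        by (simp add: linmap_def lin_simps linmap_add[OF linmap_diamond2] linmap_smult[OF linmap_diamond2]
            smult_diff_right algebra_simps)
    next
      fix ys assume "ys \<in> Poly_Mapping.keys y"
      then have ys: "ys \<noteq> []" using assms(3) by (simp add: sha_elem_def)
      show "DeltaT \<Delta> (diamond (Poly_Mapping.single xs 1) (Poly_Mapping.single ys 1)) -
          bullet (DeltaT \<Delta> (Poly_Mapping.single xs 1)) (DeltaT \<Delta> (Poly_Mapping.single ys 1))
        \<in> submod (\<Union>F\<in>slots_sh2. slot_gens scale F)"
        using main_basis[OF xs ys] by (simp add: eqv_def Ssh2_def)
    qed
  qed
  then show ?thesis by (simp add: tensor_eq_def)
qed

end
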